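(* Let $F$ be a nonempty subset of $\mathbb{R}^2$ and $u \in \mathbb{S}$. If $F - F = \{x - y : x,y \in F\}$ is disjoint from some double wedge around $u$, then the restriction of $T_u$ to $F$ is a quasi-isometric embedding $F \to \mathbb{R}$.
   Context: $\mathbb{S}$ is the unit circle in $\mathbb{R}^2$. For $u = (u_1,u_2) \in \mathbb{S}$, $T_u : \mathbb{R}^2 \to \mathbb{R}$ is the orthogonal projection parallel to $u$, i.e. $T_u(x) = \langle x, (u_2,-u_1)\rangle$, so $T_u(x)=T_u(y)$ iff $x - y \in \mathbb{R}u$. A double wedge around $u$ is a set $C^u_{s,\varepsilon} := \{tv : t \in \mathbb{R}, |t| > s, v \in \mathbb{S}, \|v-u\| < \varepsilon\}$ for some $s,\varepsilon > 0$. For $\lambda,\delta>0$, a map $f : X \to Y$ between subsets of Euclidean spaces is a $(\lambda,\delta)$-quasi-isometry if $\frac{1}{\lambda}\|x-x'\| - \delta \leq \|f(x)-f(x')\| \leq \lambda\|x-x'\| + \delta$ for all $x,x' \in X$ and every $y \in Y$ is within distance $<\delta$ of some $f(x)$; a quasi-isometry is a $(\lambda,\delta)$-quasi-isometry for some $\lambda,\delta>0$. A map $g : X \to \mathbb{R}$ is a quasi-isometric embedding if $g$ is a quasi-isometry $X \to g(X)$. *)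

theory Defs
  imports "HOL-Analysis.Analysis"
begin

text \<open>The plane R^2 is modelled as real \<times> real (Euclidean norm).\<close>

definition unit_circle :: "(real \<times> real) set" where
  "unit_circle = sphere 0 1"

definition proj_T :: "real \<times> real \<Rightarrow> real \<times> real \<Rightarrow> real" where
  "proj_T u x = x \<bullet> (snd u, - fst u)"

definition double_wedge :: "real \<times> real \<Rightarrow> real \<Rightarrow> real \<Rightarrow> (real \<times> real) set" where
  "double_wedge u s \<epsilon> = {t *\<^sub>R v | t v. \<bar>t\<bar> > s \<and> v \<in> unit_circle \<and> norm (v - u) < \<epsilon>}"

definition quasi_isometry_with ::
  "real \<Rightarrow> real \<Rightarrow> ('a::real_normed_vector \<Rightarrow> 'b::real_normed_vector) \<Rightarrow> 'a set \<Rightarrow> 'b set \<Rightarrow> bool" where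
  "quasi_isometry_with lam \<delta> f X Y \<longleftrightarrow>
     (\<forall>x\<in>X. \<forall>x'\<in>X. norm (x - x') / lam - \<delta> \<le> norm (f x - f x')
                    \<and> norm (f x - f x') \<le> lam * norm (x - x') + \<delta>)
     \<and> (\<forall>y\<in>Y. \<exists>x\<in>X. norm (y - f x) < \<delta>)"

definition quasi_isometry ::
  "('a::real_normed_vector \<Rightarrow> 'b::real_normed_vector) \<Rightarrow> 'a set \<Rightarrow> 'b set \<Rightarrow> bool" where
  "quasi_isometry f X Y \<longleftrightarrow> (\<exists>lam>0. \<exists>\<delta>>0. quasi_isometry_with lam \<delta> f X Y)"

definition qi_embedding :: "('a::real_normed_vector \<Rightarrow> real) \<Rightarrow> 'a set \<Rightarrow> bool" where
  "qi_embedding g X \<longleftrightarrow> quasi_isometry g X (g ` X)"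

end

theory Submission
  imports Defs
begin

lemma key:
  fixes d u :: "real \<times> real" and s \<epsilon> :: real
  assumes u: "u \<in> unit_circle" and s: "norm d > s" and "s > 0" and e: "\<epsilon> > 0"
    and nw: "d \<notin> double_wedge u s \<epsilon>"
  shows "\<epsilon>^2 * norm d / 2 \<le> \<bar>proj_T u d\<bar>"
proof -
  define n where "n = norm d"
  have n0: "n > 0" using s assms(3) n_def by linarith
  define v where "v = (1/n) *\<^sub>R d"
  have vn: "norm v = 1" using n0 by (simp add: v_def n_def)
  have d1: "d = n *\<^sub>R v" using n0 by (simp add: v_def)
  have d2: "d = (-n) *\<^sub>R (-v)" using d1 by simp
  have "norm (v - u) \<ge> \<epsilon>"
  proof (rule ccontr)
    assume "\<not> ?thesis"
    hence "\<bar>n\<bar> > s \<and> v \<in> unit_circle \<and> norm (v - u) < \<epsilon>"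
      using vn s n_def n0 by (auto simp: unit_circle_def)
    hence "d \<in> double_wedge u s \<epsilon>" unfolding double_wedge_def
      using d1 by blast
    thus False using nw by simp
  qed
  moreover have "norm (-v - u) \<ge> \<epsilon>"
  proof (rule ccontr)
    assume "\<not> ?thesis"
    hence "\<bar>-n\<bar> > s \<and> -v \<in> unit_circle \<and> norm (-v - u) < \<epsilon>"
      using vn s n_def n0 by (auto simp: unit_circle_def)
    hence "d \<in> double_wedge u s \<epsilon>" unfolding double_wedge_def
      using d2 by blast
    thus False using nw by simp
  qed
  ultimately have A1: "\<epsilon>^2 \<le> (norm (v - u))^2" and A2: "\<epsilon>^2 \<le> (norm (-v - u))^2"
    using e by (auto intro: power_mono)
  obtain v1 v2 where vv: "v = (v1, v2)" by fastforce
  obtain u1 u2 where uu: "u = (u1, u2)" by fastforce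
  have v1: "v1^2 + v2^2 = 1" using vn vv by (simp add: norm_prod_def)
  have u1: "u1^2 + u2^2 = 1" using u uu by (simp add: norm_prod_def unit_circle_def)
  have B1: "\<epsilon>^2 \<le> (v1 - u1)^2 + (v2 - u2)^2" using A1 vv uu by (simp add: norm_prod_def)
  have "(norm (-v-u))^2 = (-v1-u1)^2 + (-v2-u2)^2" using vv uu by (simp add: norm_prod_def)
  hence B2: "\<epsilon>^2 \<le> (-v1-u1)^2 + (-v2-u2)^2" using A2 by simp
  define a where "a = v1*u1 + v2*u2"
  define b where "b = v1*u2 - v2*u1"
  have "a^2 + b^2 = (v1^2+v2^2)*(u1^2+u2^2)" unfolding a_def b_def by algebra
  hence ab: "a^2 + b^2 = 1" using v1 u1 by simp
  have "(v1-u1)^2+(v2-u2)^2 = (v1^2+v2^2)+(u1^2+u2^2) - 2*a" unfolding a_def by algebra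
  hence C1: "\<epsilon>^2/2 \<le> 1 - a" using B1 v1 u1 by linarith
  have "(-v1-u1)^2+(-v2-u2)^2 = (v1^2+v2^2)+(u1^2+u2^2) + 2*a" unfolding a_def by algebra
  hence C2: "\<epsilon>^2/2 \<le> 1 + a" using B2 v1 u1 by linarith
  have p: "0 \<le> \<epsilon>^2/2" by simp
  have "(\<epsilon>^2/2) * (\<epsilon>^2/2) \<le> (1 - a) * (1 + a)"
    by (rule mult_mono[OF C1 C2]) (use C1 p in linarith)+
  also have "\<dots> = b^2" using ab by algebra
  finally have "(\<epsilon>^2/2)^2 \<le> b^2" by (simp add: power2_eq_square)
  hence "\<bar>\<epsilon>^2/2\<bar> \<le> \<bar>b\<bar>" by (simp only: abs_le_square_iff)
  hence bb: "\<epsilon>^2/2 \<le> \<bar>b\<bar>" by simp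
  have "proj_T u d = n * b" using d1 vv uu by (simp add: proj_T_def b_def algebra_simps)
  hence "\<bar>proj_T u d\<bar> = n * \<bar>b\<bar>" using n0 by (simp add: abs_mult)
  moreover have "n * (\<epsilon>^2/2) \<le> n * \<bar>b\<bar>" using mult_left_mono[OF bb, of n] n0 by simp
  ultimately show ?thesis using n_def by (simp add: mult.commute)
qed

theorem lemma3p1:
  fixes F :: "(real \<times> real) set" and u :: "real \<times> real"
  assumes "F \<noteq> {}" and "u \<in> unit_circle"
    and "\<exists>s>0. \<exists>\<epsilon>>0. {x - y | x y. x \<in> F \<and> y \<in> F} \<inter> double_wedge u s \<epsilon> = {}"
  shows "qi_embedding (proj_T u) F"
proof -
  obtain s \<epsilon> where s: "s > 0" and e: "\<epsilon> > 0"
    and disj: "{x - y | x y. x \<in> F \<and> y \<in> F} \<inter> double_wedge u s \<epsilon> = {}"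
    using assms(3) by blast
  define lam where "lam = 1 + 2 / \<epsilon>^2"
  have lam1: "lam \<ge> 1" using e by (simp add: lam_def)
  have lamc: "1 / lam \<le> \<epsilon>^2 / 2"
  proof -
    have p: "\<epsilon>^2 > 0" using e by simp
    have "1 / lam = \<epsilon>^2 / (\<epsilon>^2 + 2)" proof -
      have "lam = (\<epsilon>^2 + 2) / \<epsilon>^2" unfolding lam_def using p by (simp add: add_divide_distrib)
      thus ?thesis by simp
    qed
    also have "\<dots> \<le> \<epsilon>^2 / 2" 
    proof (rule divide_left_mono)
      show "0 < (\<epsilon>^2 + 2) * 2" using p by (intro mult_pos_pos) linarith+
    qed (use p in auto)
    finally show ?thesis .
  qed
  have wn: "norm (snd u, - fst u) = 1" using assms(2)
    by (cases u) (simp add: unit_circle_def norm_prod_def)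
  have lin: "proj_T u x - proj_T u y = proj_T u (x - y)" for x y
    by (simp add: proj_T_def inner_diff_left)
  have up: "\<bar>proj_T u d\<bar> \<le> norm d" for d
    using Cauchy_Schwarz_ineq2[of d "(snd u, - fst u)"] wn by (simp add: proj_T_def)
  have "quasi_isometry_with lam (s + 1) (proj_T u) F (proj_T u ` F)"
    unfolding quasi_isometry_with_def
  proof (intro conjI ballI)
    fix x x' assume x: "x \<in> F" and x': "x' \<in> F"
    define d where "d = x - x'"
    have nw: "d \<notin> double_wedge u s \<epsilon>" using disj x x' d_def by blast
    have eq: "norm (proj_T u x - proj_T u x') = \<bar>proj_T u d\<bar>" using lin d_def by simp
    show "norm (proj_T u x - proj_T u x') \<le> lam * norm (x - x') + (s + 1)"
    proof -
      have "norm d \<le> lam * norm d" using lam1 by (simp add: mult_le_cancel_right1)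
      thus ?thesis using eq up[of d] s unfolding d_def by linarith
    qed
    show "norm (x - x') / lam - (s + 1) \<le> norm (proj_T u x - proj_T u x')"
    proof (cases "norm d > s")
      case True
      have "norm d / lam \<le> \<epsilon>^2 / 2 * norm d"
        using mult_right_mono[OF lamc, of "norm d"] by simp
      also have "\<dots> \<le> \<bar>proj_T u d\<bar>" using key[OF assms(2) True s e nw] by simp
      finally show ?thesis using eq s unfolding d_def by linarith
    next
      case False
      have "norm d \<le> norm d * lam" using lam1 by (simp add: mult_le_cancel_left1)
      hence "norm d / lam \<le> norm d" using lam1 by (simp add: divide_le_eq)
      thus ?thesis using False eq abs_ge_zero[of "proj_T u d"] s unfolding d_def by linarith
    qed
  next
    fix y assume "y \<in> proj_T u ` F"
    then obtain x where "x \<in> F" "y = proj_T u x" by blast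
    thus "\<exists>x\<in>F. norm (y - proj_T u x) < s + 1" using s by (intro bexI[of _ x]) auto
  qed
  moreover have "lam > 0" "s + 1 > 0" using lam1 s by linarith+
  ultimately show ?thesis unfolding qi_embedding_def quasi_isometry_def by blast
qed

end
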